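(* Let $\sigma,\rho\in\mathbb{R}$ and $\alpha,\beta,\gamma\in\mathbb{C}$. Define the Laurent polynomials $$\eta^{(2)}(\zeta)=\frac{\sigma}{\zeta}\,\frac{(\zeta-\gamma)(\bar\gamma\zeta+1)}{1+|\gamma|^2},\qquad \eta^{(4)}(\zeta)=\frac{\rho}{\zeta^2}\,\frac{(\zeta-\alpha)(\bar\alpha\zeta+1)}{1+|\alpha|^2}\,\frac{(\zeta-\beta)(\bar\beta\zeta+1)}{1+|\beta|^2},$$ and write their expansions as $\eta^{(2)}(\zeta)=\frac{\bar z_1}{\zeta}+x_1-z_1\zeta$ and $\eta^{(4)}(\zeta)=\frac{\bar z_2}{\zeta^2}+\frac{\bar v_2}{\zeta}+x_2-v_2\zeta+z_2\zeta^2$ (so $x_1,x_2\in\mathbb{R}$, $z_1,z_2,v_2\in\mathbb{C}$). Define $$g_{\sigma^2}=4|z_1|^2+x_1^2,\qquad g_{\rho^2}=4|z_2|^2+|v_2|^2+\tfrac13x_2^2,$$ $$g_{\rho\sigma^2}=\tfrac23x_2(x_1^2-2|z_1|^2)+4z_2\bar z_1^2+4\bar z_2z_1^2+2v_2\bar z_1x_1+2\bar v_2z_1x_1,$$ $$g_{\rho^2\sigma^2}=(8|z_2|^2-|v_2|^2-\tfrac23x_2^2)(x_1^2-2|z_1|^2)-12z_2\bar v_2\bar z_1x_1-12\bar z_2v_2z_1x_1+8z_2x_2\bar z_1^2+8\bar z_2x_2z_1^2-2v_2x_2\bar z_1x_1-2\bar v_2x_2z_1x_1-3v_2^2\bar z_1^2-3\bar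 v_2^2z_1^2.$$ For $a,b\in\mathbb{C}$ let $\delta_{ab}=2\arccos\frac{|1+\bar a b|}{\sqrt{(1+|a|^2)(1+|b|^2)}}$ (the Fubini–Study distance on the Riemann sphere), and set $$Q_\pm^2=(\cos\delta_{\alpha\gamma}\pm\cos\delta_{\beta\gamma})^2,\qquad Q_0^2=\det\begin{pmatrix}1&\cos\delta_{\alpha\gamma}&\cos\delta_{\alpha\beta}\\ \cos\delta_{\alpha\gamma}&1&\cos\delta_{\beta\gamma}\\ \cos\delta_{\alpha\beta}&\cos\delta_{\beta\gamma}&1\end{pmatrix}.$$ Then $$g_{\rho\sigma^2}=\rho\sigma^2\Big(\cos\delta_{\alpha\gamma}\cos\delta_{\beta\gamma}-\tfrac13\cos\delta_{\alpha\beta}\Big),\qquad g_{\rho^2\sigma^2}=g_{\rho^2}g_{\sigma^2}+\tfrac14\rho^2\sigma^2\big(Q_0^2-Q_+^2-Q_-^2\big).$$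
   Context: $\eta^{(2)}$ and $\eta^{(4)}$ are real ${\cal O}(2)$ and ${\cal O}(4)$ multiplets in Majorana (root) form; the quantities $g$ are $SU(2)$-invariants built from their coefficients. *)

theory Defs
  imports "HOL-Analysis.Analysis"
begin

definition eta2 :: "real \<Rightarrow> complex \<Rightarrow> complex \<Rightarrow> complex" where
  "eta2 \<sigma> \<gamma> \<zeta> =
     (complex_of_real \<sigma> / \<zeta>) * ((\<zeta> - \<gamma>) * (cnj \<gamma> * \<zeta> + 1) / complex_of_real (1 + (cmod \<gamma>)\<^sup>2))"

definition eta4 :: "real \<Rightarrow> complex \<Rightarrow> complex \<Rightarrow> complex \<Rightarrow> complex" where
  "eta4 \<rho> \<alpha> \<beta> \<zeta> =
     (complex_of_real \<rho> / \<zeta>\<^sup>2)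
     * ((\<zeta> - \<alpha>) * (cnj \<alpha> * \<zeta> + 1) / complex_of_real (1 + (cmod \<alpha>)\<^sup>2))
     * ((\<zeta> - \<beta>) * (cnj \<beta> * \<zeta> + 1) / complex_of_real (1 + (cmod \<beta>)\<^sup>2))"

definition fs_dist :: "complex \<Rightarrow> complex \<Rightarrow> real" where
  "fs_dist a b = 2 * arccos (cmod (1 + cnj a * b) / sqrt ((1 + (cmod a)\<^sup>2) * (1 + (cmod b)\<^sup>2)))"

end

theory Submission imports Defs "HOL-Computational_Algebra.Polynomial" begin

lemma poly4_zero:
  fixes c0 c1 c2 c3 c4 :: complex
  assumes "\<forall>\<zeta>. \<zeta> \<noteq> 0 \<longrightarrow> c0 + c1 * \<zeta> + c2 * \<zeta>^2 + c3 * \<zeta>^3 + c4 * \<zeta>^4 = 0"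
  shows "c0 = 0 \<and> c1 = 0 \<and> c2 = 0 \<and> c3 = 0 \<and> c4 = 0"
proof -
  let ?P = "[:c0, c1, c2, c3, c4:]"
  have ev: "poly ?P \<zeta> = c0 + c1 * \<zeta> + c2 * \<zeta>^2 + c3 * \<zeta>^3 + c4 * \<zeta>^4" for \<zeta>
    by (simp add: eval_nat_numeral algebra_simps)
  have "?P = 0"
  proof (rule ccontr)
    assume "?P \<noteq> 0"
    then have "finite {x. poly ?P x = 0}" by (rule poly_roots_finite)
    moreover have "UNIV - {0} \<subseteq> {x. poly ?P x = 0}" using assms unfolding ev by auto
    ultimately have "finite (UNIV - {0::complex})" by (rule finite_subset[rotated])
    then have "finite (UNIV :: complex set)" by simp
    then show False using infinite_UNIV_char_0 by blast
  qed
  then show ?thesis by simp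
qed

lemma eta2_coeffs:
  assumes exp2: "\<And>\<zeta>. \<zeta> \<noteq> 0 \<Longrightarrow>
      eta2 \<sigma> \<gamma> \<zeta> = cnj z1 / \<zeta> + complex_of_real x1 - z1 * \<zeta>"
  shows "z1 = - of_real \<sigma> * cnj \<gamma> / of_real (1 + (cmod \<gamma>)\<^sup>2)"
    and "complex_of_real x1 = of_real \<sigma> * (1 - cnj \<gamma> * \<gamma>) / of_real (1 + (cmod \<gamma>)\<^sup>2)"
proof -
  define N where "N = complex_of_real (1 + (cmod \<gamma>)\<^sup>2)"
  have "1 + (cmod \<gamma>)\<^sup>2 > 0" by (simp add: add_pos_nonneg)
  then have N: "N \<noteq> 0" unfolding N_def by (metis of_real_eq_0_iff less_irrefl)
  have "\<forall>\<zeta>. \<zeta> \<noteq> 0 \<longrightarrow> (- of_real \<sigma> * \<gamma> / N - cnj z1) + (of_real \<sigma> * (1 - cnj \<gamma> * \<gamma>) / N - of_real x1) * \<zeta>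
     + (of_real \<sigma> * cnj \<gamma> / N + z1) * \<zeta>^2 + 0 * \<zeta>^3 + 0 * \<zeta>^4 = 0"
  proof (intro allI impI)
    fix \<zeta> :: complex assume z: "\<zeta> \<noteq> 0"
    have "(- of_real \<sigma> * \<gamma> / N - cnj z1) + (of_real \<sigma> * (1 - cnj \<gamma> * \<gamma>) / N - of_real x1) * \<zeta>
     + (of_real \<sigma> * cnj \<gamma> / N + z1) * \<zeta>^2 + 0 * \<zeta>^3 + 0 * \<zeta>^4
       = (eta2 \<sigma> \<gamma> \<zeta> - (cnj z1 / \<zeta> + complex_of_real x1 - z1 * \<zeta>)) * \<zeta>"
      unfolding eta2_def N_def[symmetric] using z N by (simp add: field_simps; algebra)
    also have "\<dots> = 0" using exp2[OF z] by simp
    finally show "(- of_real \<sigma> * \<gamma> / N - cnj z1) + (of_real \<sigma> * (1 - cnj \<gamma> * \<gamma>) / N - of_real x1) * \<zeta>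
     + (of_real \<sigma> * cnj \<gamma> / N + z1) * \<zeta>^2 + 0 * \<zeta>^3 + 0 * \<zeta>^4 = 0" .
  qed
  from poly4_zero[OF this] have c: "of_real \<sigma> * cnj \<gamma> / N + z1 = 0"
    "of_real \<sigma> * (1 - cnj \<gamma> * \<gamma>) / N - of_real x1 = 0" by auto
  from c(1) show "z1 = - of_real \<sigma> * cnj \<gamma> / of_real (1 + (cmod \<gamma>)\<^sup>2)"
    unfolding N_def[symmetric] by (simp add: algebra_simps eq_neg_iff_add_eq_0)
  from c(2) show "complex_of_real x1 = of_real \<sigma> * (1 - cnj \<gamma> * \<gamma>) / of_real (1 + (cmod \<gamma>)\<^sup>2)"
    unfolding N_def[symmetric] by simp
qed


lemma eta4_coeffs:
  assumes exp4: "\<And>\<zeta>. \<zeta> \<noteq> 0 \<Longrightarrow>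
      eta4 \<rho> \<alpha> \<beta> \<zeta> = cnj z2 / \<zeta>\<^sup>2 + cnj v2 / \<zeta> + complex_of_real x2 - v2 * \<zeta> + z2 * \<zeta>\<^sup>2"
  shows "z2 = of_real \<rho> * cnj \<alpha> * cnj \<beta> / (of_real (1 + (cmod \<alpha>)\<^sup>2) * of_real (1 + (cmod \<beta>)\<^sup>2))"
    and "v2 = - of_real \<rho> * (cnj \<alpha> * (1 - cnj \<beta> * \<beta>) + (1 - cnj \<alpha> * \<alpha>) * cnj \<beta>)
              / (of_real (1 + (cmod \<alpha>)\<^sup>2) * of_real (1 + (cmod \<beta>)\<^sup>2))"
    and "complex_of_real x2 = of_real \<rho> * ((1 - cnj \<alpha> * \<alpha>) * (1 - cnj \<beta> * \<beta>) - cnj \<alpha> * \<beta> - \<alpha> * cnj \<beta>)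
              / (of_real (1 + (cmod \<alpha>)\<^sup>2) * of_real (1 + (cmod \<beta>)\<^sup>2))"
proof -
  define Na where "Na = complex_of_real (1 + (cmod \<alpha>)\<^sup>2)"
  define Nb where "Nb = complex_of_real (1 + (cmod \<beta>)\<^sup>2)"
  have "1 + (cmod \<alpha>)\<^sup>2 > 0" by (simp add: add_pos_nonneg)
  then have Na: "Na \<noteq> 0" unfolding Na_def by (metis of_real_eq_0_iff less_irrefl)
  have "1 + (cmod \<beta>)\<^sup>2 > 0" by (simp add: add_pos_nonneg)
  then have Nb: "Nb \<noteq> 0" unfolding Nb_def by (metis of_real_eq_0_iff less_irrefl)
  define c0 where "c0 = of_real \<rho> * \<alpha> * \<beta> / (Na * Nb) - cnj z2"
  define c1 where "c1 = of_real \<rho> * (- (1 - cnj \<alpha> * \<alpha>) * \<beta> - \<alpha> * (1 - cnj \<beta> * \<beta>)) / (Na * Nb) - cnj v2"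
  define c2 where "c2 = of_real \<rho> * ((1 - cnj \<alpha> * \<alpha>) * (1 - cnj \<beta> * \<beta>) - cnj \<alpha> * \<beta> - \<alpha> * cnj \<beta>) / (Na * Nb) - of_real x2"
  define c3 where "c3 = of_real \<rho> * (cnj \<alpha> * (1 - cnj \<beta> * \<beta>) + (1 - cnj \<alpha> * \<alpha>) * cnj \<beta>) / (Na * Nb) + v2"
  define c4 where "c4 = of_real \<rho> * cnj \<alpha> * cnj \<beta> / (Na * Nb) - z2"
  have "\<forall>\<zeta>. \<zeta> \<noteq> 0 \<longrightarrow> c0 + c1 * \<zeta> + c2 * \<zeta>^2 + c3 * \<zeta>^3 + c4 * \<zeta>^4 = 0"
  proof (intro allI impI)
    fix \<zeta> :: complex assume z: "\<zeta> \<noteq> 0"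
    have "c0 + c1 * \<zeta> + c2 * \<zeta>^2 + c3 * \<zeta>^3 + c4 * \<zeta>^4
       = (eta4 \<rho> \<alpha> \<beta> \<zeta> - (cnj z2 / \<zeta>\<^sup>2 + cnj v2 / \<zeta> + complex_of_real x2 - v2 * \<zeta> + z2 * \<zeta>\<^sup>2)) * \<zeta>^2"
      unfolding eta4_def Na_def[symmetric] Nb_def[symmetric] c0_def c1_def c2_def c3_def c4_def
      using z Na Nb by (simp add: field_simps; algebra)
    also have "\<dots> = 0" using exp4[OF z] by simp
    finally show "c0 + c1 * \<zeta> + c2 * \<zeta>^2 + c3 * \<zeta>^3 + c4 * \<zeta>^4 = 0" .
  qed
  from poly4_zero[OF this] have c: "c2 = 0" "c3 = 0" "c4 = 0" by auto
  from c(3) show "z2 = of_real \<rho> * cnj \<alpha> * cnj \<beta> / (of_real (1 + (cmod \<alpha>)\<^sup>2) * of_real (1 + (cmod \<beta>)\<^sup>2))"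
    unfolding Na_def[symmetric] Nb_def[symmetric] c4_def by simp
  from c(2) show "v2 = - of_real \<rho> * (cnj \<alpha> * (1 - cnj \<beta> * \<beta>) + (1 - cnj \<alpha> * \<alpha>) * cnj \<beta>)
              / (of_real (1 + (cmod \<alpha>)\<^sup>2) * of_real (1 + (cmod \<beta>)\<^sup>2))"
    unfolding Na_def[symmetric] Nb_def[symmetric] c3_def by (simp add: eq_neg_iff_add_eq_0 add.commute)
  from c(1) show "complex_of_real x2 = of_real \<rho> * ((1 - cnj \<alpha> * \<alpha>) * (1 - cnj \<beta> * \<beta>) - cnj \<alpha> * \<beta> - \<alpha> * cnj \<beta>)
              / (of_real (1 + (cmod \<alpha>)\<^sup>2) * of_real (1 + (cmod \<beta>)\<^sup>2))"
    unfolding Na_def[symmetric] Nb_def[symmetric] c2_def by simp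
qed


lemma ofN: "complex_of_real (1 + (cmod a)\<^sup>2) = 1 + a * cnj a"
  by (simp only: of_real_add of_real_1 complex_norm_square)

lemma cos_aux0:
  fixes a a' b b' na nb :: complex
  assumes "na \<noteq> 0" "nb \<noteq> 0" "na = 1 + a * a'" "nb = 1 + b * b'"
  shows "2 * ((1 + a' * b) * (1 + a * b')) / (na * nb) - 1
    = (2 * a' / na * (2 * b / nb) + 2 * a / na * (2 * b' / nb)) / 2
      + (1 - a' * a) / na * ((1 - b' * b) / nb)"
  using assms(1,2) apply (simp add: field_simps)
  using assms(3,4) by algebra

lemma cos_aux:
  fixes a a' b b' :: complex
  assumes "1 + a * a' \<noteq> 0" "1 + b * b' \<noteq> 0"
  shows "2 * ((1 + a' * b) * (1 + a * b')) / ((1 + a * a') * (1 + b * b')) - 1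
    = (2 * a' / (1 + a * a') * (2 * b / (1 + b * b')) + 2 * a / (1 + a * a') * (2 * b' / (1 + b * b'))) / 2
      + (1 - a' * a) / (1 + a * a') * ((1 - b' * b) / (1 + b * b'))"
  by (rule cos_aux0[OF assms refl refl])

lemma cos_fs:
  fixes a b :: complex
  shows "complex_of_real (cos (fs_dist a b)) =
    ((2 * cnj a / of_real (1 + (cmod a)\<^sup>2)) * (2 * b / of_real (1 + (cmod b)\<^sup>2))
     + (2 * a / of_real (1 + (cmod a)\<^sup>2)) * (2 * cnj b / of_real (1 + (cmod b)\<^sup>2))) / 2
    + ((1 - cnj a * a) / of_real (1 + (cmod a)\<^sup>2)) * ((1 - cnj b * b) / of_real (1 + (cmod b)\<^sup>2))"
proof -
  define X where "X = (cmod (1 + cnj a * b))\<^sup>2"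
  define P where "P = (1 + (cmod a)\<^sup>2) * (1 + (cmod b)\<^sup>2)"
  have Ppos: "P > 0" unfolding P_def by (simp add: add_pos_nonneg)
  have "complex_of_real (P - X) = complex_of_real ((cmod (a - b))\<^sup>2)"
    unfolding P_def X_def
    apply (simp only: of_real_diff of_real_mult of_real_add of_real_1 complex_norm_square)
    by (simp; algebra)
  then have PX: "P - X = (cmod (a - b))\<^sup>2" using of_real_eq_iff by blast
  then have XP: "X \<le> P" by (metis diff_ge_0_iff_ge zero_le_power2)
  define t where "t = cmod (1 + cnj a * b) / sqrt P"
  have t0: "0 \<le> t" unfolding t_def using Ppos by simp
  have "cmod (1 + cnj a * b) \<le> sqrt P" using XP unfolding X_def by (rule real_le_rsqrt)
  then have t1: "t \<le> 1" unfolding t_def using Ppos by simp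
  have tt: "t\<^sup>2 = X / P" unfolding t_def X_def using Ppos by (simp add: power_divide)
  have "cos (fs_dist a b) = 2 * X / P - 1"
    unfolding fs_dist_def t_def[symmetric] P_def[symmetric]
    using t0 t1 tt by (simp add: cos_double_cos)
  then have "complex_of_real (cos (fs_dist a b)) = 2 * complex_of_real X / complex_of_real P - 1" by simp
  also have "\<dots> = 2 * ((1 + cnj a * b) * (1 + a * cnj b)) / ((1 + a * cnj a) * (1 + b * cnj b)) - 1"
    unfolding X_def P_def
    apply (simp only: of_real_diff of_real_mult of_real_add of_real_1 complex_norm_square)
    by simp
  also have "\<dots> = ((2 * cnj a / of_real (1 + (cmod a)\<^sup>2)) * (2 * b / of_real (1 + (cmod b)\<^sup>2))
     + (2 * a / of_real (1 + (cmod a)\<^sup>2)) * (2 * cnj b / of_real (1 + (cmod b)\<^sup>2))) / 2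
    + ((1 - cnj a * a) / of_real (1 + (cmod a)\<^sup>2)) * ((1 - cnj b * b) / of_real (1 + (cmod b)\<^sup>2))"
  proof -
    have "1 + (cmod a)\<^sup>2 > 0" "1 + (cmod b)\<^sup>2 > 0" by (simp_all add: add_pos_nonneg)
    then have na: "1 + a * cnj a \<noteq> 0" and nb: "1 + b * cnj b \<noteq> 0"
      unfolding ofN[symmetric] by (metis of_real_eq_0_iff less_irrefl)+
    show ?thesis unfolding ofN by (rule cos_aux[OF na nb])
  qed
  finally show ?thesis .
qed


lemma norm_aux:
  fixes a a' na :: complex
  assumes "na \<noteq> 0" "na = 1 + a * a'"
  shows "(2 * a' / na) * (2 * a / na) + ((1 - a' * a) / na)^2 = 1"
  using assms(1) apply (simp add: field_simps)
  using assms(2) by algebra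

lemma sq_cmod: "(complex_of_real (cmod z))^2 = z * cnj z"
  using complex_norm_square[of z] by simp

lemma half2: "- a * b / n = - a * (2 * b / n) / (2::complex)" by simp

lemma final:
  fixes \<sigma> \<rho> x1 x2 cag cbg cab :: real and z1 z2 v2 A A' B B' C C' a3 b3 c3 :: complex
  assumes cA: "cnj A = A'" and cB: "cnj B = B'" and cC: "cnj C = C'"
  and ra: "cnj a3 = a3" and rb: "cnj b3 = b3" and rc: "cnj c3 = c3"
  and na: "A * A' + a3^2 = 1" and nb: "B * B' + b3^2 = 1" and nc: "C * C' + c3^2 = 1"
  and hz1: "z1 = - of_real \<sigma> * C / 2" and hx1: "complex_of_real x1 = of_real \<sigma> * c3"
  and hz2: "z2 = of_real \<rho> * A * B / 4" and hv2: "v2 = - of_real \<rho> * (A * b3 + a3 * B) / 2"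
  and hx2: "complex_of_real x2 = of_real \<rho> * (a3 * b3 - (A * B' + A' * B) / 4)"
  and hag: "complex_of_real cag = (A * C' + A' * C) / 2 + a3 * c3"
  and hbg: "complex_of_real cbg = (B * C' + B' * C) / 2 + b3 * c3"
  and hab: "complex_of_real cab = (A * B' + A' * B) / 2 + a3 * b3"
  shows "complex_of_real (2/3 * x2 * (x1\<^sup>2 - 2 * (cmod z1)\<^sup>2))
                + 4 * z2 * (cnj z1)\<^sup>2 + 4 * cnj z2 * z1\<^sup>2
                + 2 * v2 * cnj z1 * complex_of_real x1 + 2 * cnj v2 * z1 * complex_of_real x1
          = complex_of_real (\<rho> * \<sigma>\<^sup>2 * (cag * cbg - 1/3 * cab))
     \<and> complex_of_real ((8 * (cmod z2)\<^sup>2 - (cmod v2)\<^sup>2 - 2/3 * x2\<^sup>2) * (x1\<^sup>2 - 2 * (cmod z1)\<^sup>2))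
                - 12 * z2 * cnj v2 * cnj z1 * complex_of_real x1
                - 12 * cnj z2 * v2 * z1 * complex_of_real x1
                + 8 * z2 * complex_of_real x2 * (cnj z1)\<^sup>2
                + 8 * cnj z2 * complex_of_real x2 * z1\<^sup>2
                - 2 * v2 * complex_of_real x2 * cnj z1 * complex_of_real x1
                - 2 * cnj v2 * complex_of_real x2 * z1 * complex_of_real x1
                - 3 * v2\<^sup>2 * (cnj z1)\<^sup>2 - 3 * (cnj v2)\<^sup>2 * z1\<^sup>2
          = complex_of_real ((4 * (cmod z2)\<^sup>2 + (cmod v2)\<^sup>2 + 1/3 * x2\<^sup>2) * (4 * (cmod z1)\<^sup>2 + x1\<^sup>2)
              + 1/4 * \<rho>\<^sup>2 * \<sigma>\<^sup>2 * (det (vector [vector [1, cag, cab], vector [cag, 1, cbg], vector [cab, cbg, 1]]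
                   :: real^3^3) - (cag + cbg)\<^sup>2 - (cag - cbg)\<^sup>2))"
proof -
  note cj = complex_cnj_mult complex_cnj_divide complex_cnj_minus complex_cnj_numeral
    complex_cnj_complex_of_real complex_cnj_add complex_cnj_diff complex_cnj_one cA cB cC ra rb rc
  note orl = of_real_mult of_real_diff of_real_add of_real_divide of_real_numeral of_real_power
    of_real_1 of_real_minus sq_cmod
  show ?thesis
  proof
    show "complex_of_real (2/3 * x2 * (x1\<^sup>2 - 2 * (cmod z1)\<^sup>2))
                + 4 * z2 * (cnj z1)\<^sup>2 + 4 * cnj z2 * z1\<^sup>2
                + 2 * v2 * cnj z1 * complex_of_real x1 + 2 * cnj v2 * z1 * complex_of_real x1
          = complex_of_real (\<rho> * \<sigma>\<^sup>2 * (cag * cbg - 1/3 * cab))"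
      apply (simp only: orl)
      apply (simp only: hz1 hz2 hv2 hx1 hx2 hag hbg hab cj)
      using na nb nc by (simp add: field_simps; algebra)
  next
    show "complex_of_real ((8 * (cmod z2)\<^sup>2 - (cmod v2)\<^sup>2 - 2/3 * x2\<^sup>2) * (x1\<^sup>2 - 2 * (cmod z1)\<^sup>2))
                - 12 * z2 * cnj v2 * cnj z1 * complex_of_real x1
                - 12 * cnj z2 * v2 * z1 * complex_of_real x1
                + 8 * z2 * complex_of_real x2 * (cnj z1)\<^sup>2
                + 8 * cnj z2 * complex_of_real x2 * z1\<^sup>2
                - 2 * v2 * complex_of_real x2 * cnj z1 * complex_of_real x1
                - 2 * cnj v2 * complex_of_real x2 * z1 * complex_of_real x1
                - 3 * v2\<^sup>2 * (cnj z1)\<^sup>2 - 3 * (cnj v2)\<^sup>2 * z1\<^sup>2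
          = complex_of_real ((4 * (cmod z2)\<^sup>2 + (cmod v2)\<^sup>2 + 1/3 * x2\<^sup>2) * (4 * (cmod z1)\<^sup>2 + x1\<^sup>2)
              + 1/4 * \<rho>\<^sup>2 * \<sigma>\<^sup>2 * (det (vector [vector [1, cag, cab], vector [cag, 1, cbg], vector [cab, cbg, 1]]
                   :: real^3^3) - (cag + cbg)\<^sup>2 - (cag - cbg)\<^sup>2))"
      apply (simp only: det_3 vector_3)
      apply (simp only: orl)
      apply (simp only: hz1 hz2 hv2 hx1 hx2 hag hbg hab cj)
      using na nb nc by (simp add: field_simps; algebra)
  qed
qed

theorem mainTheorem1:
  fixes \<sigma> \<rho> x1 x2 :: real and \<alpha> \<beta> \<gamma> z1 z2 v2 :: complex
  assumes exp2: "\<And>\<zeta>. \<zeta> \<noteq> 0 \<Longrightarrow>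
      eta2 \<sigma> \<gamma> \<zeta> = cnj z1 / \<zeta> + complex_of_real x1 - z1 * \<zeta>"
  and exp4: "\<And>\<zeta>. \<zeta> \<noteq> 0 \<Longrightarrow>
      eta4 \<rho> \<alpha> \<beta> \<zeta> = cnj z2 / \<zeta>\<^sup>2 + cnj v2 / \<zeta> + complex_of_real x2 - v2 * \<zeta> + z2 * \<zeta>\<^sup>2"
  shows
   "let g_s2 = 4 * (cmod z1)\<^sup>2 + x1\<^sup>2;
        g_r2 = 4 * (cmod z2)\<^sup>2 + (cmod v2)\<^sup>2 + 1/3 * x2\<^sup>2;
        g_rs2 = complex_of_real (2/3 * x2 * (x1\<^sup>2 - 2 * (cmod z1)\<^sup>2))
                + 4 * z2 * (cnj z1)\<^sup>2 + 4 * cnj z2 * z1\<^sup>2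
                + 2 * v2 * cnj z1 * complex_of_real x1 + 2 * cnj v2 * z1 * complex_of_real x1;
        g_r2s2 = complex_of_real ((8 * (cmod z2)\<^sup>2 - (cmod v2)\<^sup>2 - 2/3 * x2\<^sup>2) * (x1\<^sup>2 - 2 * (cmod z1)\<^sup>2))
                - 12 * z2 * cnj v2 * cnj z1 * complex_of_real x1
                - 12 * cnj z2 * v2 * z1 * complex_of_real x1
                + 8 * z2 * complex_of_real x2 * (cnj z1)\<^sup>2
                + 8 * cnj z2 * complex_of_real x2 * z1\<^sup>2
                - 2 * v2 * complex_of_real x2 * cnj z1 * complex_of_real x1
                - 2 * cnj v2 * complex_of_real x2 * z1 * complex_of_real x1
                - 3 * v2\<^sup>2 * (cnj z1)\<^sup>2 - 3 * (cnj v2)\<^sup>2 * z1\<^sup>2;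
        cag = cos (fs_dist \<alpha> \<gamma>); cbg = cos (fs_dist \<beta> \<gamma>); cab = cos (fs_dist \<alpha> \<beta>);
        Qp2 = (cag + cbg)\<^sup>2;
        Qm2 = (cag - cbg)\<^sup>2;
        Q02 = det (vector [vector [1, cag, cab], vector [cag, 1, cbg], vector [cab, cbg, 1]]
                   :: real^3^3)
    in g_rs2 = complex_of_real (\<rho> * \<sigma>\<^sup>2 * (cag * cbg - 1/3 * cab))
     \<and> g_r2s2 = complex_of_real (g_r2 * g_s2 + 1/4 * \<rho>\<^sup>2 * \<sigma>\<^sup>2 * (Q02 - Qp2 - Qm2))"
proof -
  define Na where "Na = 1 + (cmod \<alpha>)\<^sup>2"
  define Nb where "Nb = 1 + (cmod \<beta>)\<^sup>2"
  define Nc where "Nc = 1 + (cmod \<gamma>)\<^sup>2"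
  have "Na > 0" "Nb > 0" "Nc > 0" unfolding Na_def Nb_def Nc_def by (simp_all add: add_pos_nonneg)
  then have Na0: "complex_of_real Na \<noteq> 0" and Nb0: "complex_of_real Nb \<noteq> 0" and Nc0: "complex_of_real Nc \<noteq> 0"
    by (metis of_real_eq_0_iff less_irrefl)+
  have Na1: "complex_of_real Na = 1 + \<alpha> * cnj \<alpha>" unfolding Na_def by (rule ofN)
  have Nb1: "complex_of_real Nb = 1 + \<beta> * cnj \<beta>" unfolding Nb_def by (rule ofN)
  have Nc1: "complex_of_real Nc = 1 + \<gamma> * cnj \<gamma>" unfolding Nc_def by (rule ofN)
  define A where "A = 2 * cnj \<alpha> / complex_of_real Na"
  define A' where "A' = 2 * \<alpha> / complex_of_real Na"
  define a3 where "a3 = (1 - cnj \<alpha> * \<alpha>) / complex_of_real Na"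
  define B where "B = 2 * cnj \<beta> / complex_of_real Nb"
  define B' where "B' = 2 * \<beta> / complex_of_real Nb"
  define b3 where "b3 = (1 - cnj \<beta> * \<beta>) / complex_of_real Nb"
  define C where "C = 2 * cnj \<gamma> / complex_of_real Nc"
  define C' where "C' = 2 * \<gamma> / complex_of_real Nc"
  define c3 where "c3 = (1 - cnj \<gamma> * \<gamma>) / complex_of_real Nc"
  have cA: "cnj A = A'" unfolding A_def A'_def by simp
  have cB: "cnj B = B'" unfolding B_def B'_def by simp
  have cC: "cnj C = C'" unfolding C_def C'_def by simp
  have ra: "cnj a3 = a3" unfolding a3_def by (simp add: mult.commute)
  have rb: "cnj b3 = b3" unfolding b3_def by (simp add: mult.commute)
  have rc: "cnj c3 = c3" unfolding c3_def by (simp add: mult.commute)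
  have na: "A * A' + a3^2 = 1" unfolding A_def A'_def a3_def
    by (rule norm_aux[OF Na0], simp add: Na1 mult.commute)
  have nb: "B * B' + b3^2 = 1" unfolding B_def B'_def b3_def
    by (rule norm_aux[OF Nb0], simp add: Nb1 mult.commute)
  have nc: "C * C' + c3^2 = 1" unfolding C_def C'_def c3_def
    by (rule norm_aux[OF Nc0], simp add: Nc1 mult.commute)
  have e2: "z1 = - of_real \<sigma> * cnj \<gamma> / of_real Nc"
    "complex_of_real x1 = of_real \<sigma> * (1 - cnj \<gamma> * \<gamma>) / of_real Nc"
    unfolding Nc_def by (rule eta2_coeffs, erule exp2)+
  have e4: "z2 = of_real \<rho> * cnj \<alpha> * cnj \<beta> / (of_real Na * of_real Nb)"
    "v2 = - of_real \<rho> * (cnj \<alpha> * (1 - cnj \<beta> * \<beta>) + (1 - cnj \<alpha> * \<alpha>) * cnj \<beta>)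
              / (of_real Na * of_real Nb)"
    "complex_of_real x2 = of_real \<rho> * ((1 - cnj \<alpha> * \<alpha>) * (1 - cnj \<beta> * \<beta>) - cnj \<alpha> * \<beta> - \<alpha> * cnj \<beta>)
              / (of_real Na * of_real Nb)"
    unfolding Na_def Nb_def by (rule eta4_coeffs, erule exp4)+
  have hz1: "z1 = - of_real \<sigma> * C / 2" unfolding C_def by (subst e2(1)) (rule half2)
  have hx1: "complex_of_real x1 = of_real \<sigma> * c3" unfolding c3_def using Nc0 by (subst e2(2)) (simp add: field_simps)
  have hz2: "z2 = of_real \<rho> * A * B / 4" unfolding A_def B_def using Na0 Nb0 by (subst e4(1)) (simp add: field_simps)
  have hv2: "v2 = - of_real \<rho> * (A * b3 + a3 * B) / 2" unfolding A_def B_def a3_def b3_def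
    using Na0 Nb0 by (subst e4(2)) (simp add: field_simps)
  have hx2: "complex_of_real x2 = of_real \<rho> * (a3 * b3 - (A * B' + A' * B) / 4)"
    unfolding A_def B_def a3_def b3_def A'_def B'_def
    using Na0 Nb0 by (subst e4(3)) (simp add: field_simps; algebra)
  have hag: "complex_of_real (cos (fs_dist \<alpha> \<gamma>)) = (A * C' + A' * C) / 2 + a3 * c3"
    unfolding cos_fs A_def A'_def C_def C'_def a3_def c3_def Na_def Nc_def ..
  have hbg: "complex_of_real (cos (fs_dist \<beta> \<gamma>)) = (B * C' + B' * C) / 2 + b3 * c3"
    unfolding cos_fs B_def B'_def C_def C'_def b3_def c3_def Nb_def Nc_def ..
  have hab: "complex_of_real (cos (fs_dist \<alpha> \<beta>)) = (A * B' + A' * B) / 2 + a3 * b3"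
    unfolding cos_fs A_def A'_def B_def B'_def a3_def b3_def Na_def Nb_def ..
  show ?thesis unfolding Let_def
    by (rule final[OF cA cB cC ra rb rc na nb nc hz1 hx1 hz2 hv2 hx2 hag hbg hab])
qed

end
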